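(* The bipartite graph $G$ has a perfect matching. Moreover, for every maximum-weight perfect matching $M^*$ of $G$, the induced allocation $X$ is a complete allocation of all real items in which every real item is given to an agent that values it positively, and $X$ is Pareto optimal.
   Context: Setting: $n$ agents, $m$ real items $\mathcal M$, restricted additive valuations: there are values $v(g)>0$ with $v_{i,g}\in\{0,v(g)\}$ and $v_i(S)=\sum_{g\in S}v_{i,g}$; every real item is valued positively by at least one agent. Let $u_1>u_2>\dots>u_t$ be the distinct values in $\{v(g):g\in\mathcal M\}$ and $\mathcal M_f=\{g:v(g)=u_f\}$. Add a set $\mathcal M_d$ of $mn-m$ dummy items valued $0$ by all agents. The bipartite graph $G$ has left side $A=\{a_g: g\in\mathcal M\cup\mathcal M_d\}$ ($mn$ vertices) and right side $B=\{b_{(i,c)}: i\in[n], c\in[m]\}$; the set $\mathcal N_c=\{b_{(i,c)}:i\in[n]\}$ is called bucket $c$. Edges: for each real $g\in\mathcal M_f$, each agent $i$ with $v_{i,g}>0$ and each $c\in[m]$, an edge $(a_g,b_{(i,c)})$ of weight $-m^{t-f}\cdot c$; for each dummy $g$ and all $i,c$, an edge $(a_g,b_{(i,c)})$ of weight $0$; no other edges. The allocation induced by a perfect matching $M$ is $X_i=\{g\in\mathcal M: a_g \text{ matched in } M \text{ to some } b_{(i,c)}\}$. An integral allocation $X$ is Pareto optimal if no integral allocation $Y$ has $v_i(Y_i)\ge v_i(X_i)$ for all $i$ with strict inequality for some $i$. *)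

theory Defs
  imports Complex_Main
begin

text \<open>Conventions: agents are 0..<n, real items are 0..<m, dummy items are m..<m*n
 (so the left side A has m*n vertices).\<close>

definition agent_util :: "(nat \<Rightarrow> nat \<Rightarrow> real) \<Rightarrow> nat \<Rightarrow> nat set \<Rightarrow> real" where
  "agent_util val i S = (\<Sum>g\<in>S. val i g)"

definition is_allocation :: "nat \<Rightarrow> nat \<Rightarrow> (nat \<Rightarrow> nat set) \<Rightarrow> bool" where
  "is_allocation n m Y \<longleftrightarrow>
     (\<forall>i<n. Y i \<subseteq> {..<m}) \<and> (\<forall>g<m. \<exists>!i. i < n \<and> g \<in> Y i)"

definition pareto_optimal :: "nat \<Rightarrow> nat \<Rightarrow> (nat \<Rightarrow> nat \<Rightarrow> real) \<Rightarrow> (nat \<Rightarrow> nat set) \<Rightarrow> bool" where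
  "pareto_optimal n m val X \<longleftrightarrow> is_allocation n m X \<and>
     \<not> (\<exists>Y. is_allocation n m Y
            \<and> (\<forall>i<n. agent_util val i (Y i) \<ge> agent_util val i (X i))
            \<and> (\<exists>i<n. agent_util val i (Y i) > agent_util val i (X i)))"

definition left_vertices :: "nat \<Rightarrow> nat \<Rightarrow> nat set" where
  "left_vertices n m = {..<m * n}"

definition right_vertices :: "nat \<Rightarrow> nat \<Rightarrow> (nat \<times> nat) set" where
  "right_vertices n m = {..<n} \<times> {1..m}"

definition graph_edges :: "nat \<Rightarrow> nat \<Rightarrow> (nat \<Rightarrow> nat \<Rightarrow> real) \<Rightarrow> (nat \<times> (nat \<times> nat)) set" where
  "graph_edges n m val =
     {(g, (i, c)). g < m \<and> i < n \<and> 1 \<le> c \<and> c \<le> m \<and> val i g > 0}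
     \<union> {(g, (i, c)). m \<le> g \<and> g < m * n \<and> i < n \<and> 1 \<le> c \<and> c \<le> m}"

text \<open>Weight of an edge. For a real item g with v g = u_f (u_1 > ... > u_t the distinct
 values), t - f equals the number of distinct item values strictly smaller than v g.\<close>
definition edge_weight :: "nat \<Rightarrow> (nat \<Rightarrow> real) \<Rightarrow> nat \<times> (nat \<times> nat) \<Rightarrow> real" where
  "edge_weight m v e = (case e of (g, (i, c)) \<Rightarrow>
     if g < m then - (real m ^ card {u \<in> v ` {..<m}. u < v g}) * real c else 0)"

definition perfect_matching ::
  "('a \<times> 'b) set \<Rightarrow> 'a set \<Rightarrow> 'b set \<Rightarrow> ('a \<times> 'b) set \<Rightarrow> bool" where
  "perfect_matching E L R M \<longleftrightarrow> M \<subseteq> E \<and>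
     (\<forall>a\<in>L. \<exists>!b. (a, b) \<in> M) \<and> (\<forall>b\<in>R. \<exists>!a. (a, b) \<in> M)"

definition max_weight_perfect_matching ::
  "('a \<times> 'b) set \<Rightarrow> 'a set \<Rightarrow> 'b set \<Rightarrow> ('a \<times> 'b \<Rightarrow> real) \<Rightarrow> ('a \<times> 'b) set \<Rightarrow> bool" where
  "max_weight_perfect_matching E L R w M \<longleftrightarrow> perfect_matching E L R M \<and>
     (\<forall>M'. perfect_matching E L R M' \<longrightarrow> (\<Sum>e\<in>M'. w e) \<le> (\<Sum>e\<in>M. w e))"

definition induced_allocation :: "nat \<Rightarrow> (nat \<times> (nat \<times> nat)) set \<Rightarrow> nat \<Rightarrow> nat set" where
  "induced_allocation m M i = {g. g < m \<and> (\<exists>c. (g, (i, c)) \<in> M)}"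

end

theory Submission
  imports Defs
begin

lemma owner_sum:
  assumes "is_allocation n m Y" "g<m" "j<n" "g\<in>Y j"
  shows "(\<Sum>i<n. if g\<in>Y i then val i g else 0) = (val j g :: real)"
proof -
  have "\<forall>i<n. g\<in>Y i \<longleftrightarrow> i=j" using assms unfolding is_allocation_def by blast
  then have "(\<Sum>i<n. if g\<in>Y i then val i g else 0) = (\<Sum>i<n. if i=j then val i g else (0::real))"
    by (intro sum.cong) auto
  also have "\<dots> = val j g" using assms(3) by simp
  finally show ?thesis .
qed

lemma total_util:
  assumes "is_allocation n m Y"
  shows "(\<Sum>i<n. agent_util val i (Y i)) = (\<Sum>g<m. \<Sum>i<n. if g\<in>Y i then val i g else (0::real))"
proof -
  have "\<And>i. i<n \<Longrightarrow> agent_util val i (Y i) = (\<Sum>g<m. if g\<in>Y i then val i g else 0)"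
  proof -
    fix i assume "i<n"
    then have "Y i = {..<m} \<inter> Y i" using assms unfolding is_allocation_def by blast
    then have "agent_util val i (Y i) = sum (val i) ({..<m} \<inter> Y i)" unfolding agent_util_def by simp
    also have "\<dots> = (\<Sum>g<m. if g\<in>Y i then val i g else 0)" by (simp add: sum.inter_restrict)
    finally show "agent_util val i (Y i) = (\<Sum>g<m. if g\<in>Y i then val i g else 0)" .
  qed
  then have "(\<Sum>i<n. agent_util val i (Y i)) = (\<Sum>i<n. \<Sum>g<m. if g\<in>Y i then val i g else 0)"
    by (intro sum.cong) auto
  also have "\<dots> = (\<Sum>g<m. \<Sum>i<n. if g\<in>Y i then val i g else 0)" by (rule sum.swap)
  finally show ?thesis .
qed

lemma po_lemma:
  fixes v :: "nat \<Rightarrow> real"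
  assumes X: "is_allocation n m X" and pos: "\<forall>i<n. \<forall>g\<in>X i. val i g > 0"
    and restricted: "\<forall>i<n. \<forall>g<m. val i g = 0 \<or> val i g = v g"
    and v_pos: "\<forall>g<m. v g > 0"
  shows "pareto_optimal n m val X"
proof -
  have "\<not> (\<exists>Y. is_allocation n m Y
            \<and> (\<forall>i<n. agent_util val i (Y i) \<ge> agent_util val i (X i))
            \<and> (\<exists>i<n. agent_util val i (Y i) > agent_util val i (X i)))"
  proof
    assume "\<exists>Y. is_allocation n m Y
            \<and> (\<forall>i<n. agent_util val i (Y i) \<ge> agent_util val i (X i))
            \<and> (\<exists>i<n. agent_util val i (Y i) > agent_util val i (X i))"
    then obtain Y where Y: "is_allocation n m Y"
      and ge: "\<forall>i<n. agent_util val i (Y i) \<ge> agent_util val i (X i)"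
      and gt: "\<exists>i<n. agent_util val i (Y i) > agent_util val i (X i)" by blast
    have "(\<Sum>i<n. agent_util val i (X i)) < (\<Sum>i<n. agent_util val i (Y i))"
      using ge gt by (intro sum_strict_mono_ex1) auto
    moreover have "(\<Sum>g<m. \<Sum>i<n. if g\<in>Y i then val i g else (0::real))
        \<le> (\<Sum>g<m. \<Sum>i<n. if g\<in>X i then val i g else (0::real))"
    proof (rule sum_mono)
      fix g assume "g \<in> {..<m}"
      then have g: "g<m" by simp
      obtain j where j: "j<n" "g\<in>Y j" using Y g unfolding is_allocation_def by blast
      obtain k where k: "k<n" "g\<in>X k" using X g unfolding is_allocation_def by blast
      have "val j g \<le> v g" using restricted j g v_pos by force
      moreover have "val k g = v g" using restricted pos k g by force
      ultimately show "(\<Sum>i<n. if g\<in>Y i then val i g else (0::real))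
        \<le> (\<Sum>i<n. if g\<in>X i then val i g else (0::real))"
        using owner_sum[OF Y g j] owner_sum[OF X g k] by simp
    qed
    ultimately show False using total_util[OF X, of val] total_util[OF Y, of val] by linarith
  qed
  then show ?thesis using X unfolding pareto_optimal_def by blast
qed

lemma alloc_lemma:
  assumes PM: "perfect_matching (graph_edges n m val) (left_vertices n m) (right_vertices n m) M"
    and valued: "\<forall>g<m. \<exists>i<n. val i g > 0"
  shows "is_allocation n m (induced_allocation m M)
           \<and> (\<forall>i<n. \<forall>g\<in>induced_allocation m M i. val i g > 0)"
proof -
  have sub: "M \<subseteq> graph_edges n m val"
    and L: "\<forall>a\<in>left_vertices n m. \<exists>!b. (a, b) \<in> M" using PM unfolding perfect_matching_def by auto
  have posv: "\<forall>i<n. \<forall>g\<in>induced_allocation m M i. val i g > 0"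
  proof (intro allI impI ballI)
    fix i g assume "i<n" "g \<in> induced_allocation m M i"
    then obtain c where "g<m" "(g,(i,c))\<in>M" unfolding induced_allocation_def by blast
    then show "val i g > 0" using sub unfolding graph_edges_def by auto
  qed
  have "\<forall>g<m. \<exists>!i. i < n \<and> g \<in> induced_allocation m M i"
  proof (intro allI impI)
    fix g assume g: "g<m"
    then obtain i0 where "i0<n" using valued by blast
    then have "1 \<le> n" by simp
    then have mm: "m*1 \<le> m*n" by (rule mult_le_mono2)
    have "g < m*n" using g mm by linarith
    then have "g \<in> left_vertices n m" unfolding left_vertices_def by simp
    then have "\<exists>!b. (g,b)\<in>M" using L by blast
    then obtain b where b: "(g,b)\<in>M" and bu: "\<forall>b'. (g,b')\<in>M \<longrightarrow> b' = b" unfolding Ex1_def by blast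
    obtain i c where bic: "b = (i,c)" by (cases b)
    have "i<n" using sub b bic unfolding graph_edges_def by auto
    moreover have "g \<in> induced_allocation m M i" using b bic g unfolding induced_allocation_def by auto
    moreover have "\<And>i'. g \<in> induced_allocation m M i' \<Longrightarrow> i' = i"
    proof -
      fix i' assume "g \<in> induced_allocation m M i'"
      then obtain c' where "(g,(i',c'))\<in>M" unfolding induced_allocation_def by blast
      then have "(i',c') = b" using bu by blast
      then show "i' = i" using bic by simp
    qed
    ultimately show "\<exists>!i. i < n \<and> g \<in> induced_allocation m M i" by blast
  qed
  moreover have "\<forall>i<n. induced_allocation m M i \<subseteq> {..<m}" unfolding induced_allocation_def by auto
  ultimately show ?thesis using posv unfolding is_allocation_def by blast
qed

lemma pm_exists:
  assumes valued: "\<forall>g<m. \<exists>i<n. val i g > (0::real)"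
  shows "\<exists>M. perfect_matching (graph_edges n m val) (left_vertices n m) (right_vertices n m) M"
proof -
  define ag where "ag g = (SOME i. i<n \<and> val i g > 0)" for g
  have ag: "ag g < n \<and> val (ag g) g > 0" if "g<m" for g
  proof -
    have "\<exists>i. i<n \<and> val i g > 0" using valued that by blast
    then show ?thesis unfolding ag_def by (rule someI_ex)
  qed
  define I where "I = (\<lambda>g. (ag g, Suc g)) ` {..<m}"
  define R where "R = right_vertices n m"
  define D where "D = {m..<m*n}"
  have IR: "I \<subseteq> R" using ag unfolding I_def R_def right_vertices_def by auto
  have injI: "inj_on (\<lambda>g. (ag g, Suc g)) {..<m}" by (auto simp: inj_on_def)
  have cI: "card I = m" using card_image[OF injI] unfolding I_def by simp
  have cR: "card R = n*m" unfolding R_def right_vertices_def by (simp add: card_cartesian_product)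
  have finR: "finite R" unfolding R_def right_vertices_def by simp
  have finI: "finite I" unfolding I_def by simp
  have "card (R - I) = n*m - m" using card_Diff_subset[OF finI IR] cI cR by simp
  also have "\<dots> = card D" unfolding D_def by (simp add: mult.commute)
  finally have "card D = card (R - I)" by simp
  then obtain h where h: "bij_betw h D (R - I)"
    using finite_same_card_bij[of D "R - I"] finR unfolding D_def by auto
  have hD: "h d \<in> R - I" if "d \<in> D" for d using h that by (auto simp: bij_betw_def)
  have hinj: "inj_on h D" using h by (auto simp: bij_betw_def)
  have hsurj: "h ` D = R - I" using h by (auto simp: bij_betw_def)
  define M where "M = (\<lambda>g. (g, (ag g, Suc g))) ` {..<m} \<union> (\<lambda>d. (d, h d)) ` D"
  have "M \<subseteq> graph_edges n m val"
  proof
    fix x assume "x \<in> M"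
    then consider (r) g where "g<m" "x = (g, (ag g, Suc g))" | (d) d where "d \<in> D" "x = (d, h d)"
      unfolding M_def by blast
    then show "x \<in> graph_edges n m val"
    proof cases
      case r then show ?thesis using ag[of g] unfolding graph_edges_def by auto
    next
      case d
      obtain i c where ic: "h d = (i,c)" by (cases "h d")
      have "(i,c) \<in> R" using hD[OF d(1)] ic by simp
      then show ?thesis using d ic unfolding graph_edges_def R_def right_vertices_def D_def by auto
    qed
  qed
  moreover have "\<forall>a\<in>left_vertices n m. \<exists>!b. (a, b) \<in> M"
  proof
    fix a assume "a \<in> left_vertices n m"
    then have a: "a < m*n" unfolding left_vertices_def by simp
    show "\<exists>!b. (a, b) \<in> M"
    proof (cases "a<m")
      case True
      then have "(a, (ag a, Suc a)) \<in> M" unfolding M_def by blast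
      moreover have "b = (ag a, Suc a)" if "(a,b) \<in> M" for b
        using that True unfolding M_def D_def by auto
      ultimately show ?thesis by blast
    next
      case False
      then have aD: "a \<in> D" using a unfolding D_def by simp
      then have "(a, h a) \<in> M" unfolding M_def by blast
      moreover have "b = h a" if "(a,b) \<in> M" for b
        using that False unfolding M_def by auto
      ultimately show ?thesis by blast
    qed
  qed
  moreover have "\<forall>b\<in>right_vertices n m. \<exists>!a. (a, b) \<in> M"
  proof
    fix b assume "b \<in> right_vertices n m"
    then have bR: "b \<in> R" unfolding R_def .
    show "\<exists>!a. (a, b) \<in> M"
    proof (cases "b \<in> I")
      case True
      then obtain g where g: "g<m" "b = (ag g, Suc g)" unfolding I_def by blast
      then have "(g, b) \<in> M" unfolding M_def by blast
      moreover have "a = g" if "(a,b) \<in> M" for a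
      proof -
        from that consider (r) g' where "g'<m" "(a,b) = (g', (ag g', Suc g'))"
          | (d) d where "d \<in> D" "(a,b) = (d, h d)" unfolding M_def by blast
        then show ?thesis
        proof cases
          case r then show ?thesis using g by auto
        next
          case d then show ?thesis using hD[OF d(1)] True by auto
        qed
      qed
      ultimately show ?thesis by blast
    next
      case False
      then have "b \<in> h ` D" using hsurj bR by blast
      then obtain d where d: "d \<in> D" "b = h d" by blast
      then have "(d, b) \<in> M" unfolding M_def by blast
      moreover have "a = d" if "(a,b) \<in> M" for a
      proof -
        from that consider (r) g' where "g'<m" "(a,b) = (g', (ag g', Suc g'))"
          | (dd) d' where "d' \<in> D" "(a,b) = (d', h d')" unfolding M_def by blast
        then show ?thesis
        proof cases
          case r then have "b \<in> I" unfolding I_def by auto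
          then show ?thesis using False by blast
        next
          case dd then show ?thesis using d hinj by (auto simp: inj_on_def)
        qed
      qed
      ultimately show ?thesis by blast
    qed
  qed
  ultimately show ?thesis unfolding perfect_matching_def by blast
qed

theorem mainTheorem8:
  fixes n m :: nat and v :: "nat \<Rightarrow> real" and val :: "nat \<Rightarrow> nat \<Rightarrow> real"
  assumes v_pos: "\<forall>g<m. v g > 0"
    and restricted: "\<forall>i<n. \<forall>g<m. val i g = 0 \<or> val i g = v g"
    and valued: "\<forall>g<m. \<exists>i<n. val i g > 0"
  shows "(\<exists>M. perfect_matching (graph_edges n m val) (left_vertices n m) (right_vertices n m) M)
    \<and> (\<forall>M. max_weight_perfect_matching (graph_edges n m val) (left_vertices n m)
              (right_vertices n m) (edge_weight m v) M \<longrightarrow>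
           is_allocation n m (induced_allocation m M)
           \<and> (\<forall>i<n. \<forall>g\<in>induced_allocation m M i. val i g > 0)
           \<and> pareto_optimal n m val (induced_allocation m M))"
proof (rule conjI)
  show "\<exists>M. perfect_matching (graph_edges n m val) (left_vertices n m) (right_vertices n m) M"
    using pm_exists[OF valued] .
next
  show "\<forall>M. max_weight_perfect_matching (graph_edges n m val) (left_vertices n m)
              (right_vertices n m) (edge_weight m v) M \<longrightarrow>
           is_allocation n m (induced_allocation m M)
           \<and> (\<forall>i<n. \<forall>g\<in>induced_allocation m M i. val i g > 0)
           \<and> pareto_optimal n m val (induced_allocation m M)"
  proof (intro allI impI)
  fix M assume "max_weight_perfect_matching (graph_edges n m val) (left_vertices n m)
              (right_vertices n m) (edge_weight m v) M"
  then have PM: "perfect_matching (graph_edges n m val) (left_vertices n m) (right_vertices n m) M"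
    unfolding max_weight_perfect_matching_def by blast
  note A = alloc_lemma[OF PM valued]
  moreover have "pareto_optimal n m val (induced_allocation m M)"
    using po_lemma[of n m _ val v] A restricted v_pos by blast
  ultimately show "is_allocation n m (induced_allocation m M)
           \<and> (\<forall>i<n. \<forall>g\<in>induced_allocation m M i. val i g > 0)
           \<and> pareto_optimal n m val (induced_allocation m M)" by blast
  qed
qed

end
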